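(* Let $X$ be the Cartwright–Steger surface. Suppose $D$ is a divisor on $X$, not necessarily effective, with $K_X\cdot D=2$ and $D^2=0$. Then $D$ is numerically equivalent to one of the two $\mathbb{Q}$-divisors $$D_I=\tfrac19(E_1-E_3+2C_1)\ \ (\text{numerically } \tfrac19(2E_3+C_1-C_2)),\qquad D_{II}=\tfrac19(-E_1+5E_3-2C_1)\ \ (\text{numerically }\tfrac19(2E_3-C_1+C_2)).$$ Equivalently, $(D\cdot E_1,D\cdot E_3,D\cdot C_1)\in\{(2,2,0),(2,2,4)\}$.
   Context: The Cartwright–Steger surface $X$ is the compact arithmetic complex ball quotient of Cartwright–Steger: minimal of general type, $p_g=q=1$, $K_X^2=9$, $H^2(X,\mathbb{Z})\cong\mathbb{Z}^5$ torsion free, and $\mathrm{NS}(X)$ free of rank 3. $X$ contains irreducible totally geodesic curves $E_1,E_2,E_3$ (geometric genus 4), $C_1,C_2$ (geometric genus 4), $C_3,C_4$ (geometric genus 10) (the preimages of the two branch curves of the Deligne–Mostow quotient $\mathbb{P}(1,2,3)$), with intersection numbers (rows/columns in the order $E_1,E_2,E_3,C_1,C_2,C_3,C_4$): $$\begin{pmatrix}5&13&9&11&11&25&25\\13&5&9&7&7&29&29\\9&9&9&9&9&27&27\\11&7&9&-1&17&37&19\\11&7&9&17&-1&19&37\\25&29&27&37&19&71&89\\25&29&27&19&37&89&71\end{pmatrix}.$$ $K_X$ is numerically equivalent to $E_3$, and $3E_3$ is numerically equivalent to $E_1+C_1+C_2$. The classes of $E_1,E_3,C_1$ form a $\mathbb{Q}$-basis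 of $\mathrm{NS}(X)\otimes\mathbb{Q}$. *)

theory Defs
  imports Complex_Main
begin

definition intersection_form :: "('d::ab_group_add \<Rightarrow> 'd \<Rightarrow> int) \<Rightarrow> bool" where
  "intersection_form ip \<longleftrightarrow>
     (\<forall>a b c. ip (a + b) c = ip a c + ip b c) \<and> (\<forall>a b. ip a b = ip b a)"

definition num_equiv :: "('d \<Rightarrow> 'd \<Rightarrow> int) \<Rightarrow> 'd \<Rightarrow> 'd \<Rightarrow> bool" where
  "num_equiv ip A B \<longleftrightarrow> (\<forall>F. ip A F = ip B F)"

text \<open>The intersection matrix of E1,E2,E3,C1,C2,C3,C4 on the Cartwright--Steger surface.\<close>
definition CS_matrix :: "int list list" where
  "CS_matrix =
    [[ 5, 13,  9, 11, 11, 25, 25],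
     [13,  5,  9,  7,  7, 29, 29],
     [ 9,  9,  9,  9,  9, 27, 27],
     [11,  7,  9, -1, 17, 37, 19],
     [11,  7,  9, 17, -1, 19, 37],
     [25, 29, 27, 37, 19, 71, 89],
     [25, 29, 27, 19, 37, 89, 71]]"

end

theory Submission
  imports Defs
begin

lemma conic_sols:
  fixes x z :: int
  assumes "5*x^2 - 24*x + 2*x*z + 28 - 12*z + 2*z^2 = 0"
  shows "(x = 2 \<and> z = 0) \<or> (x = 2 \<and> z = 4)"
proof -
  have e: "(4*z+2*x-12)^2 + 36*x^2 - 144*x + 80 = 0"
    using assms by (simp add: algebra_simps power2_eq_square)
  have e2: "(4*z+2*x-12)^2 = 64 - 4*(3*x-6)^2"
    using e by (simp add: algebra_simps power2_eq_square)
  have "(3*x-6)^2 \<le> 16" using e2 zero_le_power2[of "4*z+2*x-12"] by linarith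
  hence "\<bar>3*x-6\<bar> \<le> 4" using abs_le_square_iff[of "3*x-6" 4] by simp
  hence "x = 1 \<or> x = 2 \<or> x = 3" by auto
  moreover have "(4*z+2*x-12)^2 \<le> 64"
    using e2 zero_le_power2[of "3*x-6"] by linarith
  hence "\<bar>4*z+2*x-12\<bar> \<le> 8" using abs_le_square_iff[of "4*z+2*x-12" 8] by simp
  ultimately have "x \<in> {1,2,3} \<and> z \<in> {-1..6}" by auto
  hence "x \<in> {1,2,3} \<and> z \<in> {-1,0,1,2,3,4,5,6}" by auto
  thus ?thesis using assms by (auto simp: power2_eq_square)
qed

theorem mainTheorem4:
  fixes ip :: "'d::ab_group_add \<Rightarrow> 'd \<Rightarrow> int"
    and K E1 E2 E3 C1 C2 C3 C4 D :: 'd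
  assumes form: "intersection_form ip"
    and matrix: "\<forall>i<7. \<forall>j<7. ip ([E1, E2, E3, C1, C2, C3, C4] ! i) ([E1, E2, E3, C1, C2, C3, C4] ! j)
                   = CS_matrix ! i ! j"
    and canonical: "num_equiv ip K E3"
    and rel: "num_equiv ip (E3 + E3 + E3) (E1 + C1 + C2)"
    and spanning: "\<forall>F. \<exists>n::int. n \<noteq> 0 \<and> (\<exists>a b c::int. \<forall>G.
                     n * ip F G = a * ip E1 G + b * ip E3 G + c * ip C1 G)"
    and independent: "\<forall>a b c::int. (\<forall>G. a * ip E1 G + b * ip E3 G + c * ip C1 G = 0)
                     \<longrightarrow> a = 0 \<and> b = 0 \<and> c = 0"
    and KD: "ip K D = 2"
    and DD: "ip D D = 0"
  shows "(\<forall>F. (of_int (ip D F) :: rat)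
              = (1/9) * of_int (ip E1 F - ip E3 F + 2 * ip C1 F))
       \<or> (\<forall>F. (of_int (ip D F) :: rat)
              = (1/9) * of_int (- ip E1 F + 5 * ip E3 F - 2 * ip C1 F))"
proof -
  have sym: "\<And>u v. ip u v = ip v u" using form unfolding intersection_form_def by blast
  have m11: "ip E1 E1 = 5" using matrix[rule_format, of 0 0] by (simp add: CS_matrix_def)
  have m13: "ip E1 E3 = 9" using matrix[rule_format, of 0 2] by (simp add: CS_matrix_def)
  have m14: "ip E1 C1 = 11" using matrix[rule_format, of 0 3] by (simp add: CS_matrix_def)
  have m33: "ip E3 E3 = 9" using matrix[rule_format, of 2 2] by (simp add: CS_matrix_def)
  have m34: "ip E3 C1 = 9" using matrix[rule_format, of 2 3] by (simp add: CS_matrix_def)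
  have m44: "ip C1 C1 = -1" using matrix[rule_format, of 3 3] by (simp add: CS_matrix_def)
  have y: "ip E3 D = 2" using canonical KD unfolding num_equiv_def by metis
  obtain n a b c where n0: "n \<noteq> 0" and sp: "\<And>G. n * ip D G = a * ip E1 G + b * ip E3 G + c * ip C1 G"
    using spanning by blast
  define x where "x = ip D E1"
  define z where "z = ip D C1"
  have y': "ip D E3 = 2" using y sym by metis
  have q1: "n*x = 5*a+9*b+11*c" using sp[of E1] m11 m13 m14 sym[of E3 E1] sym[of C1 E1] unfolding x_def by simp
  have q2: "n*2 = 9*a+9*b+9*c" using sp[of E3] m13 m33 m34 sym[of C1 E3] y' by simp
  have q3: "n*z = 11*a+9*b-c" using sp[of C1] m14 m34 m44 unfolding z_def by simp
  have q4: "0 = a*x + b*2 + c*z" using sp[of D] DD sym[of E1 D] sym[of C1 D] y unfolding x_def z_def by simp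
  have A: "18*a = n*(-5*x+12-z)" using q1 q2 q3 by (simp add: algebra_simps)
  have B: "54*b = n*(18*x-42+9*z)" using q1 q2 q3 by (simp add: algebra_simps)
  have C: "18*c = n*(-x+6-2*z)" using q1 q2 q3 by (simp add: algebra_simps)
  have "54*(a*x + b*2 + c*z) = 3*(18*a)*x + 2*(54*b) + 3*(18*c)*z" by (simp add: algebra_simps)
  also have "\<dots> = -3*n*(5*x^2 - 24*x + 2*x*z + 28 - 12*z + 2*z^2)"
    unfolding A B C by (simp add: algebra_simps power2_eq_square)
  finally have "n*(5*x^2 - 24*x + 2*x*z + 28 - 12*z + 2*z^2) = 0" using q4 by simp
  hence "5*x^2 - 24*x + 2*x*z + 28 - 12*z + 2*z^2 = 0" using n0 by simp
  hence cs: "(x = 2 \<and> z = 0) \<or> (x = 2 \<and> z = 4)" by (rule conic_sols)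
  thus ?thesis
  proof
    assume h: "x = 2 \<and> z = 0"
    have "9*a = n" "9*b = -n" "9*c = 2*n" using A B C h by simp_all
    have 9: "\<forall>F. 9 * ip D F = ip E1 F - ip E3 F + 2 * ip C1 F"
    proof
      fix F
      have "n*(9 * ip D F) = (9*a) * ip E1 F + (9*b) * ip E3 F + (9*c) * ip C1 F"
        using sp[of F] by (simp add: algebra_simps)
      also have "\<dots> = n*(ip E1 F - ip E3 F + 2 * ip C1 F)"
        unfolding \<open>9*a = n\<close> \<open>9*b = -n\<close> \<open>9*c = 2*n\<close> by (simp add: algebra_simps)
      finally have "n*(9 * ip D F) = n*(ip E1 F - ip E3 F + 2 * ip C1 F)" .
      thus "9 * ip D F = ip E1 F - ip E3 F + 2 * ip C1 F" using n0 by simp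
    qed
    hence "\<forall>F. (of_int (ip D F) :: rat) = (1/9) * of_int (ip E1 F - ip E3 F + 2 * ip C1 F)"
    proof (intro allI)
      fix F
      have "(of_int (9 * ip D F) :: rat) = of_int (ip E1 F - ip E3 F + 2 * ip C1 F)" using 9 by (metis of_int_eq_iff)
      thus "(of_int (ip D F) :: rat) = (1/9) * of_int (ip E1 F - ip E3 F + 2 * ip C1 F)" by simp
    qed
    thus ?thesis by blast
  next
    assume h: "x = 2 \<and> z = 4"
    have "9*a = -n" "9*b = 5*n" "9*c = -2*n" using A B C h by simp_all
    have 9: "\<forall>F. 9 * ip D F = - ip E1 F + 5 * ip E3 F - 2 * ip C1 F"
    proof
      fix F
      have "n*(9 * ip D F) = (9*a) * ip E1 F + (9*b) * ip E3 F + (9*c) * ip C1 F"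
        using sp[of F] by (simp add: algebra_simps)
      also have "\<dots> = n*(- ip E1 F + 5 * ip E3 F - 2 * ip C1 F)"
        unfolding \<open>9*a = -n\<close> \<open>9*b = 5*n\<close> \<open>9*c = -2*n\<close> by (simp add: algebra_simps)
      finally have "n*(9 * ip D F) = n*(- ip E1 F + 5 * ip E3 F - 2 * ip C1 F)" .
      thus "9 * ip D F = - ip E1 F + 5 * ip E3 F - 2 * ip C1 F" using n0 by simp
    qed
    hence "\<forall>F. (of_int (ip D F) :: rat) = (1/9) * of_int (- ip E1 F + 5 * ip E3 F - 2 * ip C1 F)"
    proof (intro allI)
      fix F
      have "(of_int (9 * ip D F) :: rat) = of_int (- ip E1 F + 5 * ip E3 F - 2 * ip C1 F)" using 9 by (metis of_int_eq_iff)
      thus "(of_int (ip D F) :: rat) = (1/9) * of_int (- ip E1 F + 5 * ip E3 F - 2 * ip C1 F)" by simp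
    qed
    thus ?thesis by blast
  qed
qed

end
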